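(* Let $G$ be a group. Then $G$ is sofic as a group if and only if $G$ is strongly sofic as a monoid.
   Context: Hamming metric on $\operatorname{Map}(D)$ (monoid of maps $D\to D$, $D$ finite non-empty): $d_D^{\mathrm{Ham}}(f,g)=\frac{1}{|D|}|\{v:f(v)\ne g(v)\}|$. A group $G$ is sofic (as a group) if for every finite $K\subset G$ and $\varepsilon>0$ there are a non-empty finite set $D$ and a map $\sigma\colon G\to\mathrm{Sym}(D)$ (permutations of $D$) with $\sigma(1_G)=\mathrm{Id}_D$, $d_D^{\mathrm{Ham}}(\sigma(k_1k_2),\sigma(k_1)\sigma(k_2))\le\varepsilon$ for all $k_1,k_2\in K$, and $d_D^{\mathrm{Ham}}(\sigma(k_1),\sigma(k_2))\ge1-\varepsilon$ for all distinct $k_1,k_2\in K$. A monoid $M$ is strongly sofic if for every finite $K\subset M$ there is an integer $\Delta_K\ge1$ such that for every $\varepsilon>0$ there exist a non-empty finite set $D$ and a map $\sigma\colon M\to\operatorname{Map}(D)$ with (1) $\sigma(1_M)=\mathrm{Id}_D$; (2) $d_D^{\mathrm{Ham}}(\sigma(k_1k_2),\sigma(k_1)\sigma(k_2))\le\varepsilon$ for $k_1,k_2\in K$; (3) $d_D^{\mathrm{Ham}}(\sigma(k_1),\sigma(k_2))\ge1-\varepsilon$ for distinct $k_1,k_2\in K$; (4) $|\sigma(k)^{-1}(v)|\le\Delta_K$ for $k\in K$, $v\in D$. *)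

theory Defs
  imports Complex_Main "HOL-Algebra.Group"
begin

text \<open>Normalized Hamming distance on maps D -> D (functions are compared only on D).
  Finite sets D are taken as finite subsets of nat (any finite set is in bijection with one).\<close>
definition ham :: "nat set \<Rightarrow> (nat \<Rightarrow> nat) \<Rightarrow> (nat \<Rightarrow> nat) \<Rightarrow> real" where
  "ham D f g = real (card {v \<in> D. f v \<noteq> g v}) / real (card D)"

definition sofic_group :: "('a, 'b) monoid_scheme \<Rightarrow> bool" where
  "sofic_group G \<longleftrightarrow>
    (\<forall>K (\<epsilon>::real). K \<subseteq> carrier G \<and> finite K \<and> \<epsilon> > 0 \<longrightarrow>
      (\<exists>(D::nat set) (\<sigma>::'a \<Rightarrow> nat \<Rightarrow> nat).
         finite D \<and> D \<noteq> {} \<and>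
         (\<forall>x\<in>carrier G. bij_betw (\<sigma> x) D D) \<and>
         (\<forall>v\<in>D. \<sigma> \<one>\<^bsub>G\<^esub> v = v) \<and>
         (\<forall>k1\<in>K. \<forall>k2\<in>K. ham D (\<sigma> (k1 \<otimes>\<^bsub>G\<^esub> k2)) (\<sigma> k1 \<circ> \<sigma> k2) \<le> \<epsilon>) \<and>
         (\<forall>k1\<in>K. \<forall>k2\<in>K. k1 \<noteq> k2 \<longrightarrow> ham D (\<sigma> k1) (\<sigma> k2) \<ge> 1 - \<epsilon>)))"

definition strongly_sofic_monoid :: "('a, 'b) monoid_scheme \<Rightarrow> bool" where
  "strongly_sofic_monoid M \<longleftrightarrow>
    (\<forall>K. K \<subseteq> carrier M \<and> finite K \<longrightarrow>
      (\<exists>\<Delta>::nat. \<Delta> \<ge> 1 \<and>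
        (\<forall>\<epsilon>::real. \<epsilon> > 0 \<longrightarrow>
          (\<exists>(D::nat set) (\<sigma>::'a \<Rightarrow> nat \<Rightarrow> nat).
             finite D \<and> D \<noteq> {} \<and>
             (\<forall>x\<in>carrier M. \<sigma> x ` D \<subseteq> D) \<and>
             (\<forall>v\<in>D. \<sigma> \<one>\<^bsub>M\<^esub> v = v) \<and>
             (\<forall>k1\<in>K. \<forall>k2\<in>K. ham D (\<sigma> (k1 \<otimes>\<^bsub>M\<^esub> k2)) (\<sigma> k1 \<circ> \<sigma> k2) \<le> \<epsilon>) \<and>
             (\<forall>k1\<in>K. \<forall>k2\<in>K. k1 \<noteq> k2 \<longrightarrow> ham D (\<sigma> k1) (\<sigma> k2) \<ge> 1 - \<epsilon>) \<and>
             (\<forall>k\<in>K. \<forall>v\<in>D. card {w \<in> D. \<sigma> k w = v} \<le> \<Delta>)))))"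

end

theory Submission
  imports Defs
begin

lemma ham_tri:
  assumes "finite D"
  shows "ham D f h \<le> ham D f g + ham D g h"
proof -
  have "{v\<in>D. f v \<noteq> h v} \<subseteq> {v\<in>D. f v \<noteq> g v} \<union> {v\<in>D. g v \<noteq> h v}" by auto
  hence "card {v\<in>D. f v \<noteq> h v} \<le> card ({v\<in>D. f v \<noteq> g v} \<union> {v\<in>D. g v \<noteq> h v})"
    by (intro card_mono) (auto simp: assms)
  also have "\<dots> \<le> card {v\<in>D. f v \<noteq> g v} + card {v\<in>D. g v \<noteq> h v}" by (rule card_Un_le)
  finally have "real (card {v\<in>D. f v \<noteq> h v}) \<le> real (card {v\<in>D. f v \<noteq> g v}) + real (card {v\<in>D. g v \<noteq> h v})"
    by linarith
  thus ?thesis unfolding ham_def by (simp add: add_divide_distrib[symmetric] divide_right_mono)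
qed

lemma ham_sym: "ham D f g = ham D g f"
  unfolding ham_def by (metis (no_types, lifting) Collect_cong)

lemma ham_agree:
  assumes "finite D" "\<forall>v\<in>B. f v = g v"
  shows "ham D f g \<le> real (card (D - B)) / real (card D)"
proof -
  have "{v\<in>D. f v \<noteq> g v} \<subseteq> D - B" using assms by auto
  hence "card {v\<in>D. f v \<noteq> g v} \<le> card (D - B)" using assms by (intro card_mono) auto
  thus ?thesis unfolding ham_def by (simp add: divide_right_mono)
qed

lemma extend_bij:
  assumes "finite D" "A \<subseteq> D" "inj_on f A" "f ` A \<subseteq> D"
  shows "\<exists>g. bij_betw g D D \<and> (\<forall>v\<in>A. g v = f v)"
proof -
  have cA: "card (f ` A) = card A" using assms by (simp add: card_image)
  have "card (D - A) = card (D - f ` A)"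
    using assms cA by (simp add: card_Diff_subset finite_subset)
  then obtain h where h: "bij_betw h (D - A) (D - f ` A)"
    using assms finite_same_card_bij by blast
  have b1: "bij_betw f A (f ` A)" using assms by (simp add: bij_betw_imageI)
  have "bij_betw (\<lambda>v. if v \<in> A then f v else h v) (A \<union> (D - A)) (f ` A \<union> (D - f ` A))"
    by (rule bij_betw_disjoint_Un[OF b1 h]) auto
  moreover have "A \<union> (D - A) = D" "f ` A \<union> (D - f ` A) = D" using assms by auto
  ultimately show ?thesis by (intro exI[of _ "\<lambda>v. if v \<in> A then f v else h v"]) auto
qed

lemma forward:
  fixes G :: "('a, 'b) monoid_scheme"
  assumes "sofic_group G"
  shows "strongly_sofic_monoid G"
  unfolding strongly_sofic_monoid_def
proof (intro allI impI)
  fix K assume K: "K \<subseteq> carrier G \<and> finite K"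
  show "\<exists>\<Delta>::nat. \<Delta> \<ge> 1 \<and> (\<forall>\<epsilon>::real. \<epsilon> > 0 \<longrightarrow> (\<exists>(D::nat set) (\<sigma>::'a \<Rightarrow> nat \<Rightarrow> nat).
             finite D \<and> D \<noteq> {} \<and>
             (\<forall>x\<in>carrier G. \<sigma> x ` D \<subseteq> D) \<and>
             (\<forall>v\<in>D. \<sigma> \<one>\<^bsub>G\<^esub> v = v) \<and>
             (\<forall>k1\<in>K. \<forall>k2\<in>K. ham D (\<sigma> (k1 \<otimes>\<^bsub>G\<^esub> k2)) (\<sigma> k1 \<circ> \<sigma> k2) \<le> \<epsilon>) \<and>
             (\<forall>k1\<in>K. \<forall>k2\<in>K. k1 \<noteq> k2 \<longrightarrow> ham D (\<sigma> k1) (\<sigma> k2) \<ge> 1 - \<epsilon>) \<and>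
             (\<forall>k\<in>K. \<forall>v\<in>D. card {w \<in> D. \<sigma> k w = v} \<le> \<Delta>)))"
  proof (rule exI[of _ "1::nat"], intro conjI allI impI)
    fix \<epsilon> :: real assume e: "\<epsilon> > 0"
    have "\<exists>(D::nat set) (\<sigma>::'a \<Rightarrow> nat \<Rightarrow> nat).
         finite D \<and> D \<noteq> {} \<and>
         (\<forall>x\<in>carrier G. bij_betw (\<sigma> x) D D) \<and>
         (\<forall>v\<in>D. \<sigma> \<one>\<^bsub>G\<^esub> v = v) \<and>
         (\<forall>k1\<in>K. \<forall>k2\<in>K. ham D (\<sigma> (k1 \<otimes>\<^bsub>G\<^esub> k2)) (\<sigma> k1 \<circ> \<sigma> k2) \<le> \<epsilon>) \<and>
         (\<forall>k1\<in>K. \<forall>k2\<in>K. k1 \<noteq> k2 \<longrightarrow> ham D (\<sigma> k1) (\<sigma> k2) \<ge> 1 - \<epsilon>)"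
      using assms K e unfolding sofic_group_def by simp
    then obtain D and \<sigma> :: "'a \<Rightarrow> nat \<Rightarrow> nat" where D1: "finite D" and D2: "D \<noteq> {}"
      and b: "\<forall>x\<in>carrier G. bij_betw (\<sigma> x) D D"
      and r1: "\<forall>v\<in>D. \<sigma> \<one>\<^bsub>G\<^esub> v = v"
      and r2: "\<forall>k1\<in>K. \<forall>k2\<in>K. ham D (\<sigma> (k1 \<otimes>\<^bsub>G\<^esub> k2)) (\<sigma> k1 \<circ> \<sigma> k2) \<le> \<epsilon>"
      and r3: "\<forall>k1\<in>K. \<forall>k2\<in>K. k1 \<noteq> k2 \<longrightarrow> ham D (\<sigma> k1) (\<sigma> k2) \<ge> 1 - \<epsilon>"
      by (elim exE conjE)
    have r4: "\<forall>k\<in>K. \<forall>v\<in>D. card {w \<in> D. \<sigma> k w = v} \<le> 1"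
    proof (intro ballI)
      fix k v assume kv: "k \<in> K" "v \<in> D"
      have "bij_betw (\<sigma> k) D D" using b K kv by blast
      hence inj: "inj_on (\<sigma> k) D" by (simp add: bij_betw_def)
      have fin: "finite {w \<in> D. \<sigma> k w = v}" using D1 by simp
      have "\<forall>w1\<in>{w \<in> D. \<sigma> k w = v}. \<forall>w2\<in>{w \<in> D. \<sigma> k w = v}. w1 = w2"
        using inj by (auto dest: inj_onD)
      thus "card {w \<in> D. \<sigma> k w = v} \<le> 1"
        using card_le_Suc0_iff_eq[OF fin] by simp
    qed
    have img: "\<forall>x\<in>carrier G. \<sigma> x ` D \<subseteq> D" using b by (simp add: bij_betw_def)
    show "\<exists>(D::nat set) (\<sigma>::'a \<Rightarrow> nat \<Rightarrow> nat).
             finite D \<and> D \<noteq> {} \<and>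
             (\<forall>x\<in>carrier G. \<sigma> x ` D \<subseteq> D) \<and>
             (\<forall>v\<in>D. \<sigma> \<one>\<^bsub>G\<^esub> v = v) \<and>
             (\<forall>k1\<in>K. \<forall>k2\<in>K. ham D (\<sigma> (k1 \<otimes>\<^bsub>G\<^esub> k2)) (\<sigma> k1 \<circ> \<sigma> k2) \<le> \<epsilon>) \<and>
             (\<forall>k1\<in>K. \<forall>k2\<in>K. k1 \<noteq> k2 \<longrightarrow> ham D (\<sigma> k1) (\<sigma> k2) \<ge> 1 - \<epsilon>) \<and>
             (\<forall>k\<in>K. \<forall>v\<in>D. card {w \<in> D. \<sigma> k w = v} \<le> 1)"
      apply (rule exI[of _ D])
      apply (rule exI[of _ \<sigma>])
      apply (intro conjI)
            apply (fact D1)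
           apply (fact D2)
          apply (fact img)
         apply (fact r1)
        apply (fact r2)
       apply (fact r3)
      apply (fact r4)
      done
  qed simp
qed

lemma backward:
  fixes G :: "('a, 'b) monoid_scheme" (structure)
  assumes "group G" "strongly_sofic_monoid G"
  shows "sofic_group G"
  unfolding sofic_group_def
proof (intro allI impI)
  fix K and \<epsilon>::real assume KE: "K \<subseteq> carrier G \<and> finite K \<and> \<epsilon> > 0"
  interpret group G by fact
  define K2 where "K2 = K \<union> (\<lambda>(a,b). a \<otimes> b) ` (Sigma K (\<lambda>_. K)) \<union> {\<one>}"
  define K' where "K' = K2 \<union> (\<lambda>x. inv x) ` K2"
  have K2c: "K2 \<subseteq> carrier G" using KE by (auto simp: K2_def)
  have K'c: "K' \<subseteq> carrier G" using K2c by (auto simp: K'_def)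
  have K'f: "finite K'" using KE by (simp add: K'_def K2_def)
  have invK': "\<forall>x\<in>K'. inv x \<in> K'"
  proof
    fix x assume x: "x \<in> K'"
    show "inv x \<in> K'"
    proof (cases "x \<in> K2")
      case True thus ?thesis by (simp add: K'_def)
    next
      case False
      then obtain y where "y \<in> K2" "x = inv y" using x by (auto simp: K'_def)
      thus ?thesis using K2c by (auto simp: K'_def)
    qed
  qed
  have oneK': "\<one> \<in> K'" by (simp add: K'_def K2_def)
  have prodK': "\<forall>a\<in>K. \<forall>b\<in>K. a \<otimes> b \<in> K'" by (auto simp: K'_def K2_def)
  have KK': "K \<subseteq> K'" by (auto simp: K'_def K2_def)
  define \<delta> where "\<delta> = \<epsilon>/4"
  have dpos: "\<delta> > 0" using KE by (simp add: \<delta>_def)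
  have H0: "\<exists>\<Delta>::nat. \<Delta> \<ge> 1 \<and>
        (\<forall>\<epsilon>::real. \<epsilon> > 0 \<longrightarrow>
          (\<exists>(D::nat set) (\<sigma>::'a \<Rightarrow> nat \<Rightarrow> nat).
             finite D \<and> D \<noteq> {} \<and>
             (\<forall>x\<in>carrier G. \<sigma> x ` D \<subseteq> D) \<and>
             (\<forall>v\<in>D. \<sigma> \<one> v = v) \<and>
             (\<forall>k1\<in>K'. \<forall>k2\<in>K'. ham D (\<sigma> (k1 \<otimes> k2)) (\<sigma> k1 \<circ> \<sigma> k2) \<le> \<epsilon>) \<and>
             (\<forall>k1\<in>K'. \<forall>k2\<in>K'. k1 \<noteq> k2 \<longrightarrow> ham D (\<sigma> k1) (\<sigma> k2) \<ge> 1 - \<epsilon>) \<and>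
             (\<forall>k\<in>K'. \<forall>v\<in>D. card {w \<in> D. \<sigma> k w = v} \<le> \<Delta>)))"
    using assms(2) K'c K'f unfolding strongly_sofic_monoid_def by simp
  then obtain \<Delta> :: nat where H1: "\<forall>\<epsilon>::real. \<epsilon> > 0 \<longrightarrow>
          (\<exists>(D::nat set) (\<sigma>::'a \<Rightarrow> nat \<Rightarrow> nat).
             finite D \<and> D \<noteq> {} \<and>
             (\<forall>x\<in>carrier G. \<sigma> x ` D \<subseteq> D) \<and>
             (\<forall>v\<in>D. \<sigma> \<one> v = v) \<and>
             (\<forall>k1\<in>K'. \<forall>k2\<in>K'. ham D (\<sigma> (k1 \<otimes> k2)) (\<sigma> k1 \<circ> \<sigma> k2) \<le> \<epsilon>) \<and>
             (\<forall>k1\<in>K'. \<forall>k2\<in>K'. k1 \<noteq> k2 \<longrightarrow> ham D (\<sigma> k1) (\<sigma> k2) \<ge> 1 - \<epsilon>) \<and>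
             (\<forall>k\<in>K'. \<forall>v\<in>D. card {w \<in> D. \<sigma> k w = v} \<le> \<Delta>))"
    by (elim exE conjE)
  from H1[rule_format, OF dpos] obtain D and \<sigma> :: "'a \<Rightarrow> nat \<Rightarrow> nat" where D: "finite D" "D \<noteq> {}"
    and img: "\<forall>x\<in>carrier G. \<sigma> x ` D \<subseteq> D"
    and one: "\<forall>v\<in>D. \<sigma> \<one> v = v"
    and mul: "\<forall>k1\<in>K'. \<forall>k2\<in>K'. ham D (\<sigma> (k1 \<otimes> k2)) (\<sigma> k1 \<circ> \<sigma> k2) \<le> \<delta>"
    and dist: "\<forall>k1\<in>K'. \<forall>k2\<in>K'. k1 \<noteq> k2 \<longrightarrow> ham D (\<sigma> k1) (\<sigma> k2) \<ge> 1 - \<delta>"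
    by (elim exE conjE)
  define A where "A x = {v\<in>D. \<sigma> (inv x) (\<sigma> x v) = v}" for x
  have AD: "A x \<subseteq> D" for x by (auto simp: A_def)
  have Abig: "\<forall>x\<in>K'. real (card (D - A x)) / real (card D) \<le> \<delta>"
  proof
    fix x assume x: "x \<in> K'"
    have "inv x \<otimes> x = \<one>" using x K'c by auto
    moreover have "ham D (\<sigma> (inv x \<otimes> x)) (\<sigma> (inv x) \<circ> \<sigma> x) \<le> \<delta>" using mul invK' x by blast
    ultimately have "ham D (\<sigma> \<one>) (\<sigma> (inv x) \<circ> \<sigma> x) \<le> \<delta>" by simp
    moreover have "{v\<in>D. \<sigma> \<one> v \<noteq> (\<sigma> (inv x) \<circ> \<sigma> x) v} = D - A x" using one by (auto simp: A_def)
    ultimately show "real (card (D - A x)) / real (card D) \<le> \<delta>" by (simp add: ham_def)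
  qed
  have Ainj: "inj_on (\<sigma> x) (A x)" for x
    by (rule inj_onI) (metis (mono_tags, lifting) A_def mem_Collect_eq)
  have "\<forall>x\<in>K'. \<exists>g. bij_betw g D D \<and> (\<forall>v\<in>A x. g v = \<sigma> x v)"
  proof
    fix x assume x: "x \<in> K'"
    have "\<sigma> x ` A x \<subseteq> D" using img x K'c AD by blast
    thus "\<exists>g. bij_betw g D D \<and> (\<forall>v\<in>A x. g v = \<sigma> x v)"
      using extend_bij[OF D(1) AD Ainj] by blast
  qed
  then have "\<exists>ex. \<forall>x\<in>K'. bij_betw (ex x) D D \<and> (\<forall>v\<in>A x. ex x v = \<sigma> x v)"
    by (rule bchoice)
  then obtain ex where ex: "\<forall>x\<in>K'. bij_betw (ex x) D D \<and> (\<forall>v\<in>A x. ex x v = \<sigma> x v)"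
    by blast
  define \<tau> where "\<tau> x = (if x \<in> K' then ex x else id)" for x
  have tb: "\<forall>x\<in>carrier G. bij_betw (\<tau> x) D D" using ex by (auto simp: \<tau>_def)
  have tA: "\<forall>x\<in>K'. \<forall>v\<in>A x. \<tau> x v = \<sigma> x v" using ex by (auto simp: \<tau>_def)
  have t1: "\<forall>v\<in>D. \<tau> \<one> v = v"
  proof
    fix v assume v: "v \<in> D"
    have "v \<in> A \<one>" using v one by (auto simp: A_def)
    thus "\<tau> \<one> v = v" using tA oneK' one v by auto
  qed
  have close: "\<forall>x\<in>K'. ham D (\<tau> x) (\<sigma> x) \<le> \<delta>"
  proof
    fix x assume x: "x \<in> K'"
    have "ham D (\<tau> x) (\<sigma> x) \<le> real (card (D - A x)) / real (card D)"
      using tA x by (intro ham_agree[OF D(1)]) blast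
    thus "ham D (\<tau> x) (\<sigma> x) \<le> \<delta>" using Abig x by fastforce
  qed
  have compose: "\<forall>k1\<in>K'. \<forall>k2\<in>K'. ham D (\<sigma> k1 \<circ> \<sigma> k2) (\<tau> k1 \<circ> \<tau> k2) \<le> 2*\<delta>"
  proof (intro ballI)
    fix k1 k2 assume k1: "k1 \<in> K'" and k2: "k2 \<in> K'"
    define B where "B = {v \<in> A k2. \<sigma> k2 v \<in> A k1}"
    have agree: "\<forall>v\<in>B. (\<sigma> k1 \<circ> \<sigma> k2) v = (\<tau> k1 \<circ> \<tau> k2) v"
    proof
      fix v assume v: "v \<in> B"
      hence "v \<in> A k2" "\<sigma> k2 v \<in> A k1" by (simp_all add: B_def)
      thus "(\<sigma> k1 \<circ> \<sigma> k2) v = (\<tau> k1 \<circ> \<tau> k2) v" using tA k1 k2 by simp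
    qed
    have sub: "D - B \<subseteq> (D - A k2) \<union> {v\<in>A k2. \<sigma> k2 v \<notin> A k1}" by (auto simp: B_def)
    have "card (D - B) \<le> card ((D - A k2) \<union> {v\<in>A k2. \<sigma> k2 v \<notin> A k1})"
    proof (rule card_mono)
      have "{v\<in>A k2. \<sigma> k2 v \<notin> A k1} \<subseteq> D" using AD by blast
      hence "finite {v\<in>A k2. \<sigma> k2 v \<notin> A k1}" using D(1) finite_subset by blast
      thus "finite ((D - A k2) \<union> {v\<in>A k2. \<sigma> k2 v \<notin> A k1})" using D(1) by simp
    qed (fact sub)
    also have "\<dots> \<le> card (D - A k2) + card {v\<in>A k2. \<sigma> k2 v \<notin> A k1}" by (rule card_Un_le)
    also have "card {v\<in>A k2. \<sigma> k2 v \<notin> A k1} \<le> card (D - A k1)"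
    proof (rule card_inj_on_le)
      show "inj_on (\<sigma> k2) {v\<in>A k2. \<sigma> k2 v \<notin> A k1}"
        by (rule inj_on_subset[OF Ainj]) blast
      show "\<sigma> k2 ` {v\<in>A k2. \<sigma> k2 v \<notin> A k1} \<subseteq> D - A k1" using img k2 K'c AD by blast
      show "finite (D - A k1)" using D(1) by simp
    qed
    finally have "real (card (D - B)) \<le> real (card (D - A k2)) + real (card (D - A k1))" by simp
    hence "real (card (D - B)) / real (card D) \<le> real (card (D - A k2)) / real (card D) + real (card (D - A k1)) / real (card D)"
      by (simp add: add_divide_distrib[symmetric] divide_right_mono)
    also have "\<dots> \<le> 2 * \<delta>" using Abig[rule_format, OF k1] Abig[rule_format, OF k2] by linarith
    finally show "ham D (\<sigma> k1 \<circ> \<sigma> k2) (\<tau> k1 \<circ> \<tau> k2) \<le> 2*\<delta>"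
      using ham_agree[OF D(1) agree] by linarith
  qed
  have M: "\<forall>k1\<in>K. \<forall>k2\<in>K. ham D (\<tau> (k1 \<otimes> k2)) (\<tau> k1 \<circ> \<tau> k2) \<le> \<epsilon>"
  proof (intro ballI)
    fix k1 k2 assume k1: "k1 \<in> K" and k2: "k2 \<in> K"
    have a: "ham D (\<tau> (k1 \<otimes> k2)) (\<sigma> (k1 \<otimes> k2)) \<le> \<delta>" using close prodK' k1 k2 by blast
    have b: "ham D (\<sigma> (k1 \<otimes> k2)) (\<sigma> k1 \<circ> \<sigma> k2) \<le> \<delta>" using mul KK' k1 k2 by blast
    have c: "ham D (\<sigma> k1 \<circ> \<sigma> k2) (\<tau> k1 \<circ> \<tau> k2) \<le> 2*\<delta>" using compose KK' k1 k2 by blast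
    have "ham D (\<tau> (k1 \<otimes> k2)) (\<tau> k1 \<circ> \<tau> k2) \<le> ham D (\<tau> (k1 \<otimes> k2)) (\<sigma> (k1 \<otimes> k2)) + ham D (\<sigma> (k1 \<otimes> k2)) (\<tau> k1 \<circ> \<tau> k2)"
      by (rule ham_tri[OF D(1)])
    moreover have "ham D (\<sigma> (k1 \<otimes> k2)) (\<tau> k1 \<circ> \<tau> k2) \<le> ham D (\<sigma> (k1 \<otimes> k2)) (\<sigma> k1 \<circ> \<sigma> k2) + ham D (\<sigma> k1 \<circ> \<sigma> k2) (\<tau> k1 \<circ> \<tau> k2)"
      by (rule ham_tri[OF D(1)])
    ultimately show "ham D (\<tau> (k1 \<otimes> k2)) (\<tau> k1 \<circ> \<tau> k2) \<le> \<epsilon>" using a b c by (simp add: \<delta>_def)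
  qed
  have S: "\<forall>k1\<in>K. \<forall>k2\<in>K. k1 \<noteq> k2 \<longrightarrow> ham D (\<tau> k1) (\<tau> k2) \<ge> 1 - \<epsilon>"
  proof (intro ballI impI)
    fix k1 k2 assume k1: "k1 \<in> K" and k2: "k2 \<in> K" and ne: "k1 \<noteq> k2"
    have a: "ham D (\<sigma> k1) (\<tau> k1) \<le> \<delta>" using close KK' k1 ham_sym[of D "\<sigma> k1" "\<tau> k1"] by auto
    have b: "ham D (\<tau> k2) (\<sigma> k2) \<le> \<delta>" using close KK' k2 by blast
    have c: "ham D (\<sigma> k1) (\<sigma> k2) \<ge> 1 - \<delta>" using dist KK' k1 k2 ne by blast
    have "ham D (\<sigma> k1) (\<sigma> k2) \<le> ham D (\<sigma> k1) (\<tau> k1) + ham D (\<tau> k1) (\<sigma> k2)"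
      by (rule ham_tri[OF D(1)])
    moreover have "ham D (\<tau> k1) (\<sigma> k2) \<le> ham D (\<tau> k1) (\<tau> k2) + ham D (\<tau> k2) (\<sigma> k2)"
      by (rule ham_tri[OF D(1)])
    ultimately show "ham D (\<tau> k1) (\<tau> k2) \<ge> 1 - \<epsilon>" using a b c KE by (simp add: \<delta>_def)
  qed
  show "\<exists>(D::nat set) (\<sigma>::'a \<Rightarrow> nat \<Rightarrow> nat).
         finite D \<and> D \<noteq> {} \<and>
         (\<forall>x\<in>carrier G. bij_betw (\<sigma> x) D D) \<and>
         (\<forall>v\<in>D. \<sigma> \<one>\<^bsub>G\<^esub> v = v) \<and>
         (\<forall>k1\<in>K. \<forall>k2\<in>K. ham D (\<sigma> (k1 \<otimes>\<^bsub>G\<^esub> k2)) (\<sigma> k1 \<circ> \<sigma> k2) \<le> \<epsilon>) \<and>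
         (\<forall>k1\<in>K. \<forall>k2\<in>K. k1 \<noteq> k2 \<longrightarrow> ham D (\<sigma> k1) (\<sigma> k2) \<ge> 1 - \<epsilon>)"
    apply (rule exI[of _ D])
    apply (rule exI[of _ \<tau>])
    apply (intro conjI)
         apply (fact D(1))
        apply (fact D(2))
       apply (fact tb)
      apply (fact t1)
     apply (fact M)
    apply (fact S)
    done
qed

theorem proposition3p3:
  fixes G :: "('a, 'b) monoid_scheme"
  assumes "group G"
  shows "sofic_group G \<longleftrightarrow> strongly_sofic_monoid G"
  using forward backward assms by blast

end
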